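(* Let $S=\mathbb{R}/{\sim_F^*}$ and let $f:\mathbb{R}\to S$ be $f(x)=[x]_{\sim_F^*}$. Then for every $T_3$-anonymous predictor $P:{}^{\mathbb{R}}S\to{}^{\mathbb{R}}S$, the function $P(f)$ is constant, i.e. $P(f)(w)=P(f)(z)$ for all $w,z\in\mathbb{R}$.
   Context: Let $h(x)=0$ for $x\le 0$ and $h(x)=e^{-1/x}$ for $x>0$, and $s(x)=\frac{h(x)}{h(x)+h(1-x)}$ on $[0,1]$. For $A=(p_1,q_1)$, $B=(p_2,q_2)$ with $p_1<p_2$, $q_1<q_2$, let $s_{AB}:[p_1,p_2]\to[q_1,q_2]$, $s_{AB}(x)=(q_2-q_1)\,s\!\left(\frac{x-p_1}{p_2-p_1}\right)+q_1$. Let $F$ be the set of all such $s_{AB}$ with $A,B$ having rational coordinates. Write $x\sim_F y$ if some $g\in F$ has $g(x)=y$ or $g^{-1}(x)=y$, and let $\sim_F^*$ be the reflexive-transitive closure of $\sim_F$ (an equivalence relation on $\mathbb{R}$). ${}^{\mathbb{R}}S$ denotes all functions $\mathbb{R}\to S$. A predictor is $P:{}^{\mathbb{R}}S\to{}^{\mathbb{R}}S$ with $P(f)(x)=P(g)(x)$ whenever $f\upharpoonright(-\infty,x)=g\upharpoonright(-\infty,x)$. $P$ is $T_3$-anonymous if $P(f\circ t)=P(f)\circ t$ for every $f$ and every $t\in T_3$, where $T_3$ is the set of infinitely differentiable strictly increasing bijections $\mathbb{R}\to\mathbb{R}$. *)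

theory Defs
  imports "HOL-Analysis.Analysis"
begin

definition hfun :: "real \<Rightarrow> real" where
  "hfun x = (if x \<le> 0 then 0 else exp (- 1 / x))"

definition sfun :: "real \<Rightarrow> real" where
  "sfun x = hfun x / (hfun x + hfun (1 - x))"

text \<open>s_AB for A = (p1,q1), B = (p2,q2); its domain is [p1,p2].\<close>
definition sAB :: "real \<Rightarrow> real \<Rightarrow> real \<Rightarrow> real \<Rightarrow> real \<Rightarrow> real" where
  "sAB p1 q1 p2 q2 x = (q2 - q1) * sfun ((x - p1) / (p2 - p1)) + q1"

definition simF :: "real \<Rightarrow> real \<Rightarrow> bool" where
  "simF x y \<longleftrightarrow> (\<exists>p1 q1 p2 q2. p1 \<in> \<rat> \<and> q1 \<in> \<rat> \<and> p2 \<in> \<rat> \<and> q2 \<in> \<rat> \<and>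
      p1 < p2 \<and> q1 < q2 \<and>
      ((x \<in> {p1..p2} \<and> sAB p1 q1 p2 q2 x = y) \<or>
       (y \<in> {p1..p2} \<and> sAB p1 q1 p2 q2 y = x)))"

definition simF_star :: "real \<Rightarrow> real \<Rightarrow> bool" where
  "simF_star x y \<longleftrightarrow> (x, y) \<in> {(a, b). simF a b}\<^sup>*"

lemma simF_sym: "simF x y \<Longrightarrow> simF y x"
  unfolding simF_def by blast

lemma equivp_simF_star: "equivp simF_star"
proof (rule equivpI)
  show "reflp simF_star" by (simp add: reflp_def simF_star_def)
  show "transp simF_star"
    by (auto simp: transp_def simF_star_def)
  have "sym {(a, b). simF a b}" by (auto simp: sym_def intro: simF_sym)
  then have "sym ({(a, b). simF a b}\<^sup>*)" by (rule sym_rtrancl)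
  then show "symp simF_star" by (auto simp: symp_def simF_star_def sym_def)
qed

quotient_type S = real / simF_star
  by (rule equivp_simF_star)

definition T3 :: "(real \<Rightarrow> real) set" where
  "T3 = {t. (\<forall>k x. ((deriv ^^ k) t) differentiable (at x)) \<and> strict_mono t \<and> bij t}"

definition is_predictor :: "(('a::linorder \<Rightarrow> 'b) \<Rightarrow> ('a \<Rightarrow> 'b)) \<Rightarrow> bool" where
  "is_predictor P \<longleftrightarrow> (\<forall>f g x. (\<forall>y<x. f y = g y) \<longrightarrow> P f x = P g x)"

definition T3_anonymous :: "((real \<Rightarrow> 'b) \<Rightarrow> (real \<Rightarrow> 'b)) \<Rightarrow> bool" where
  "T3_anonymous P \<longleftrightarrow> (\<forall>f. \<forall>t\<in>T3. P (f \<circ> t) = P f \<circ> t)"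

end

theory Submission
  imports Defs "HOL-Computational_Algebra.Polynomial"
begin

coinductive smooth :: "(real \<Rightarrow> real) \<Rightarrow> bool" where
  smoothI: "(\<And>x. (f has_real_derivative f' x) (at x)) \<Longrightarrow> smooth f' \<Longrightarrow> smooth f"

definition sd :: "(real \<Rightarrow> real) \<Rightarrow> real \<Rightarrow> real" where
  "sd f = (SOME f'. (\<forall>x. (f has_real_derivative f' x) (at x)) \<and> smooth f')"

lemma sd: assumes "smooth f"
  shows "(f has_real_derivative sd f x) (at x)" "smooth (sd f)"
proof -
  from assms obtain f' where "\<forall>x. (f has_real_derivative f' x) (at x)" "smooth f'"
    by (cases rule: smooth.cases) auto
  then have "\<exists>f'. (\<forall>x. (f has_real_derivative f' x) (at x)) \<and> smooth f'" by blast
  from someI_ex[OF this] show "(f has_real_derivative sd f x) (at x)" "smooth (sd f)"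
    unfolding sd_def by auto
qed

definition dn :: "(real \<Rightarrow> real) \<Rightarrow> nat \<Rightarrow> real \<Rightarrow> real" where
  "dn f k = (sd ^^ k) f"

lemma dn_0[simp]: "dn f 0 = f" by (simp add: dn_def)
lemma dn_Suc: "dn f (Suc k) = sd (dn f k)" by (simp add: dn_def)

lemma dn_smooth: "smooth f \<Longrightarrow> smooth (dn f k)"
  by (induction k) (auto simp: dn_Suc sd)

lemma dn_deriv: "smooth f \<Longrightarrow> (dn f k has_real_derivative dn f (Suc k) x) (at x)"
  by (simp add: dn_Suc sd dn_smooth)

lemma family_smooth:
  assumes "\<And>k x. (D k has_real_derivative D (Suc k) x) (at x)"
  shows "smooth (D k)"
proof -
  have "\<exists>k. g = D k \<Longrightarrow> smooth g" for g
  proof (coinduction arbitrary: g)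
    case smooth
    then obtain k where "g = D k" by blast
    then show ?case using assms by blast
  qed
  then show ?thesis by blast
qed

lemma family:
  assumes "D 0 = f" "\<And>k x. (D k has_real_derivative D (Suc k) x) (at x)"
  shows "smooth f" "dn f k = D k"
proof -
  show "smooth f" using family_smooth[of D 0, OF assms(2)] assms(1) by simp
  show "dn f k = D k"
  proof (induction k)
    case 0 then show ?case using assms(1) by simp
  next
    case (Suc k)
    have "smooth (D k)" by (rule family_smooth[of D k, OF assms(2)])
    have "sd (D k) x = D (Suc k) x" for x
      using DERIV_unique[OF sd(1)[OF \<open>smooth (D k)\<close>] assms(2)] .
    then show ?case unfolding dn_Suc Suc.IH by auto
  qed
qed

lemma smooth_const: "smooth (\<lambda>x. c)" "dn (\<lambda>x. c) k = (\<lambda>x. if k = 0 then c else 0)"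
proof -
  let ?D = "\<lambda>k x. if k = 0 then c else (0::real)"
  have D0: "?D 0 = (\<lambda>x. c)" by simp
  have Dd: "(?D k has_real_derivative ?D (Suc k) x) (at x)" for k x
    by (cases k) (simp_all add: DERIV_const)
  show "smooth (\<lambda>x. c)" by (rule family(1)[of ?D, OF D0 Dd])
  show "dn (\<lambda>x. c) k = ?D k" by (rule family(2)[of ?D, OF D0 Dd])
qed

lemma smooth_add: assumes "smooth f" "smooth g"
  shows "smooth (\<lambda>x. f x + g x)" "dn (\<lambda>x. f x + g x) k = (\<lambda>x. dn f k x + dn g k x)"
proof -
  let ?D = "\<lambda>k x. dn f k x + dn g k x"
  have D0: "?D 0 = (\<lambda>x. f x + g x)" by simp
  have Dd: "(?D k has_real_derivative ?D (Suc k) x) (at x)" for k x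
    using dn_deriv[OF assms(1)] dn_deriv[OF assms(2)] by (intro DERIV_add) auto
  show "smooth (\<lambda>x. f x + g x)" by (rule family(1)[of ?D, OF D0 Dd])
  show "dn (\<lambda>x. f x + g x) k = ?D k" by (rule family(2)[of ?D, OF D0 Dd])
qed

lemma smooth_affine: assumes "smooth f"
  shows "smooth (\<lambda>x. c * f (a * x + b) + e)"
    "dn (\<lambda>x. c * f (a * x + b) + e) k = (\<lambda>x. c * a ^ k * dn f k (a * x + b) + (if k = 0 then e else 0))"
proof -
  let ?D = "\<lambda>k x. c * a ^ k * dn f k (a * x + b) + (if k = 0 then e else 0)"
  have D0: "?D 0 = (\<lambda>x. c * f (a * x + b) + e)" by simp
  have Dd: "(?D k has_real_derivative ?D (Suc k) x) (at x)" for k x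
  proof -
    have "((\<lambda>x. dn f k (a * x + b)) has_real_derivative dn f (Suc k) (a * x + b) * a) (at x)"
      by (rule DERIV_chain2[OF dn_deriv[OF assms]]) (auto intro!: derivative_eq_intros)
    then have "((\<lambda>x. c * a ^ k * dn f k (a * x + b) + (if k = 0 then e else 0)) has_real_derivative
       c * a ^ k * (dn f (Suc k) (a * x + b) * a) + 0) (at x)"
      by (intro DERIV_add DERIV_cmult) auto
    then show ?thesis by (simp add: algebra_simps)
  qed
  show "smooth (\<lambda>x. c * f (a * x + b) + e)" by (rule family(1)[of ?D, OF D0 Dd])
  show "dn (\<lambda>x. c * f (a * x + b) + e) k = ?D k" by (rule family(2)[of ?D, OF D0 Dd])
qed

definition psum :: "((real \<Rightarrow> real) \<times> (real \<Rightarrow> real)) list \<Rightarrow> real \<Rightarrow> real" where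
  "psum L x = (\<Sum>(f,g)\<leftarrow>L. f x * g x)"

definition dl :: "((real \<Rightarrow> real) \<times> (real \<Rightarrow> real)) list \<Rightarrow> ((real \<Rightarrow> real) \<times> (real \<Rightarrow> real)) list" where
  "dl L = concat (map (\<lambda>(f,g). [(sd f, g), (f, sd g)]) L)"

lemma psum_deriv: "\<forall>(f,g)\<in>set L. smooth f \<and> smooth g \<Longrightarrow> (psum L has_real_derivative psum (dl L) x) (at x)"
proof (induction L)
  case Nil then show ?case by (simp add: psum_def dl_def)
next
  case (Cons p L)
  obtain f g where p: "p = (f,g)" by (cases p)
  have IH: "(psum L has_real_derivative psum (dl L) x) (at x)" using Cons by auto
  have fg: "smooth f" "smooth g" using Cons p by auto
  have eq1: "psum (p # L) = (\<lambda>x. f x * g x + psum L x)" by (simp add: psum_def p fun_eq_iff)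
  have eq2: "psum (dl (p # L)) x = sd f x * g x + f x * sd g x + psum (dl L) x"
    by (simp add: psum_def dl_def p)
  have "((\<lambda>x. f x * g x) has_real_derivative sd f x * g x + f x * sd g x) (at x)"
    using DERIV_mult[OF sd(1)[OF fg(1)] sd(1)[OF fg(2)]] by (simp add: mult.commute)
  then show ?case unfolding eq1 eq2
    by (intro DERIV_add IH)
qed

lemma dl_smooth: "\<forall>(f,g)\<in>set L. smooth f \<and> smooth g \<Longrightarrow> \<forall>(f,g)\<in>set (dl L). smooth f \<and> smooth g"
  by (induction L) (auto simp: dl_def sd)

lemma smooth_psum: "\<forall>(f,g)\<in>set L. smooth f \<and> smooth g \<Longrightarrow> smooth (psum L)"
proof -
  have "\<exists>L. (\<forall>(f,g)\<in>set L. smooth f \<and> smooth g) \<and> h = psum L \<Longrightarrow> smooth h" for h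
  proof (coinduction arbitrary: h)
    case smooth
    then obtain L where L: "\<forall>(f,g)\<in>set L. smooth f \<and> smooth g" "h = psum L" by blast
    have d: "\<forall>x. (psum L has_real_derivative psum (dl L) x) (at x)" using psum_deriv L(1) by blast
    have s: "\<forall>(f,g)\<in>set (dl L). smooth f \<and> smooth g" using dl_smooth L(1) by blast
    show ?case using L(2) d s by blast
  qed
  then show "\<forall>(f,g)\<in>set L. smooth f \<and> smooth g \<Longrightarrow> smooth (psum L)" by blast
qed

lemma smooth_mult: "smooth f \<Longrightarrow> smooth g \<Longrightarrow> smooth (\<lambda>x. f x * g x)"
proof -
  assume "smooth f" "smooth g"
  then have "smooth (psum [(f,g)])" by (intro smooth_psum) auto
  moreover have "psum [(f,g)] = (\<lambda>x. f x * g x)" by (simp add: psum_def fun_eq_iff)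
  ultimately show ?thesis by simp
qed

lemma smooth_div:
  assumes g: "smooth g" "\<And>x. g x \<noteq> 0" and f: "smooth f"
  shows "smooth (\<lambda>x. f x / g x)"
proof -
  have "\<exists>f n. smooth f \<and> h = (\<lambda>x. f x / g x ^ n) \<Longrightarrow> smooth h" for h
  proof (coinduction arbitrary: h)
    case smooth
    then obtain f n where fn: "smooth f" "h = (\<lambda>x. f x / g x ^ n)" by blast
    define f2 where "f2 = (\<lambda>x. sd f x * g x - real n * (f x * sd g x))"
    have sf2: "smooth f2" unfolding f2_def
      using smooth_add(1)[OF smooth_mult[OF sd(2)[OF fn(1)] g(1)] smooth_affine(1)[OF smooth_mult[OF fn(1) sd(2)[OF g(1)]], of "- real n" 1 0 0]]
      by simp
    have "(h has_real_derivative f2 x / g x ^ Suc n) (at x)" for x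
    proof -
      have dp: "((\<lambda>x. g x ^ n) has_real_derivative real n * g x ^ (n - Suc 0) * sd g x) (at x)"
        by (rule DERIV_chain2[OF DERIV_pow sd(1)[OF g(1)]])
      have d: "((\<lambda>x. f x / g x ^ n) has_real_derivative
          (sd f x * g x ^ n - real n * g x ^ (n - Suc 0) * sd g x * f x) / (g x ^ n) ^ Suc (Suc 0)) (at x)"
        by (rule DERIV_quotient[OF sd(1)[OF fn(1)] dp]) (simp add: g)
      have "(sd f x * g x ^ n - real n * g x ^ (n - Suc 0) * sd g x * f x) / (g x ^ n) ^ Suc (Suc 0)
          = f2 x / g x ^ Suc n"
      proof (cases n)
        case 0 then show ?thesis by (simp add: f2_def g)
      next
        case (Suc m)
        have G: "g x \<noteq> 0" by (rule g(2))
        have N: "sd f x * g x ^ n - real n * g x ^ (n - Suc 0) * sd g x * f x = g x ^ m * f2 x"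
          by (simp add: Suc f2_def algebra_simps)
        have D: "(g x ^ n) ^ Suc (Suc 0) = g x ^ m * g x ^ Suc n"
          by (simp add: Suc power_add[symmetric] power_mult[symmetric])
        show ?thesis unfolding N D using G by simp
      qed
      then show ?thesis using d fn(2) by simp
    qed
    then show ?case using sf2 fn by (intro exI[of _ h] exI[of _ "\<lambda>x. f2 x / g x ^ Suc n"]) blast
  qed
  from this[of "\<lambda>x. f x / g x"] f show ?thesis by (metis power_one_right)
qed

lemma smooth_imp_T3diff: assumes "smooth t" shows "\<forall>k x. ((deriv ^^ k) t) differentiable (at x)"
proof -
  have eq: "(deriv ^^ k) t = dn t k" for k
  proof (induction k)
    case (Suc k)
    have "deriv (dn t k) = sd (dn t k)"
      using DERIV_imp_deriv[OF sd(1)[OF dn_smooth[OF assms]]] by (simp add: fun_eq_iff)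
    then show ?case using Suc by (simp add: dn_Suc)
  qed simp
  show ?thesis unfolding eq
  proof (intro allI)
    fix k x
    show "dn t k differentiable at x"
      using dn_deriv[OF assms, of k x] by (auto simp: real_differentiable_def)
  qed
qed

lemma smooth_series:
  fixes \<phi> :: "nat \<Rightarrow> real \<Rightarrow> real"
  assumes sm: "\<And>n. smooth (\<phi> n)"
  and bnd: "\<And>k c. \<exists>\<epsilon>>0. \<exists>M. summable M \<and> (\<forall>\<^sub>F n in sequentially. \<forall>x\<in>ball c \<epsilon>. \<bar>dn (\<phi> n) k x\<bar> \<le> M n)"
  shows "smooth (\<lambda>x. \<Sum>n. \<phi> n x)" "summable (\<lambda>n. \<phi> n x)"
proof -
  have summ: "summable (\<lambda>n. dn (\<phi> n) k x)" for k x
  proof -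
    obtain \<epsilon> M where e: "\<epsilon> > 0" "summable M"
      "\<forall>\<^sub>F n in sequentially. \<forall>y\<in>ball x \<epsilon>. \<bar>dn (\<phi> n) k y\<bar> \<le> M n"
      using bnd[where k=k and c=x] by blast
    have "\<forall>\<^sub>F n in sequentially. norm (dn (\<phi> n) k x) \<le> M n"
      using e(3) by eventually_elim (use e(1) in auto)
    then show ?thesis by (rule summable_comparison_test_ev) (rule e(2))
  qed
  have "summable (\<lambda>n. dn (\<phi> n) 0 x)" by (rule summ)
  then show "summable (\<lambda>n. \<phi> n x)" by simp
  define D where "D = (\<lambda>k x. \<Sum>n. dn (\<phi> n) k x)"
  have D0: "D 0 = (\<lambda>x. \<Sum>n. \<phi> n x)" by (simp add: D_def fun_eq_iff)
  have Dd: "(D k has_real_derivative D (Suc k) x) (at x)" for k x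
  proof -
    obtain \<epsilon> M where e: "\<epsilon> > 0" "summable M"
      "\<forall>\<^sub>F n in sequentially. \<forall>y\<in>ball x \<epsilon>. \<bar>dn (\<phi> n) (Suc k) y\<bar> \<le> M n"
      using bnd[where k="Suc k" and c=x] by blast
    have uc: "uniformly_convergent_on (ball x \<epsilon>) (\<lambda>N y. \<Sum>n<N. dn (\<phi> n) (Suc k) y)"
      by (rule Weierstrass_m_test'_ev) (use e in auto)
    have "((\<lambda>y. \<Sum>n. dn (\<phi> n) k y) has_field_derivative (\<Sum>n. dn (\<phi> n) (Suc k) x)) (at x)"
      by (rule has_field_derivative_series'(2)[OF convex_ball _ uc, where ?x0.0=x and x=x])
         (auto intro: has_field_derivative_at_within dn_deriv sm summ simp: e(1))
    then show ?thesis by (simp add: D_def)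
  qed
  show "smooth (\<lambda>x. \<Sum>n. \<phi> n x)" by (rule family(1)[of D, OF D0 Dd])
qed

fun hP :: "nat \<Rightarrow> real poly" where
  "hP 0 = 1"
| "hP (Suc k) = (hP k - pderiv (hP k)) * [:0,0,1:]"

definition hD :: "nat \<Rightarrow> real \<Rightarrow> real" where
  "hD k x = (if x \<le> 0 then 0 else poly (hP k) (1 / x) * exp (- (1 / x)))"

lemma poly_exp_lim: "((\<lambda>u. poly (p::real poly) u * exp (- u)) \<longlongrightarrow> 0) at_top"
proof -
  have eq: "poly p u * exp (- u) = (\<Sum>i\<le>degree p. coeff p i * (u ^ i / exp u))" for u
  proof -
    have "poly p u * exp (- u) = (\<Sum>i\<le>degree p. coeff p i * u ^ i) * inverse (exp u)"
      by (simp only: poly_altdef exp_minus)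
    also have "\<dots> = (\<Sum>i\<le>degree p. coeff p i * (u ^ i / exp u))"
      by (simp only: sum_distrib_right divide_inverse mult.assoc)
    finally show ?thesis .
  qed
  have "((\<lambda>u. \<Sum>i\<le>degree p. coeff p i * (u ^ i / exp u)) \<longlongrightarrow> (\<Sum>i\<le>degree p. coeff p i * 0)) at_top"
    by (intro tendsto_sum tendsto_mult tendsto_const tendsto_power_div_exp_0)
  then show ?thesis unfolding eq by simp
qed

lemma hD_deriv0: "(hD k has_real_derivative 0) (at 0)"
proof -
  have r: "((\<lambda>y. (hD k y - hD k 0) / (y - 0)) \<longlongrightarrow> 0) (at_right 0)"
  proof -
    have "((\<lambda>y. poly ([:0,1:] * hP k) (inverse y) * exp (- inverse y)) \<longlongrightarrow> 0) (at_right 0)"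
      by (rule filterlim_compose[OF poly_exp_lim filterlim_inverse_at_top_right])
    moreover have "\<forall>\<^sub>F y in at_right 0. poly ([:0,1:] * hP k) (inverse y) * exp (- inverse y)
        = (hD k y - hD k 0) / (y - 0)"
      using eventually_at_right_less[of "0::real"]
    proof eventually_elim
      case (elim y)
      have "(hD k y - hD k 0) / (y - 0) = poly (hP k) (inverse y) * exp (- inverse y) * inverse y"
        using elim by (simp add: hD_def divide_inverse)
      also have "\<dots> = poly ([:0,1:] * hP k) (inverse y) * exp (- inverse y)"
        by (simp add: poly_mult)
      finally show ?case by simp
    qed
    ultimately show ?thesis by (rule Lim_transform_eventually)
  qed
  have l: "((\<lambda>y. (hD k y - hD k 0) / (y - 0)) \<longlongrightarrow> 0) (at_left 0)"
  proof -
    have "\<forall>\<^sub>F y in at_left 0. 0 = (hD k y - hD k 0) / (y - 0)"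
      using eventually_at_left_real[of "-1" 0, OF neg_less_0_iff_less[THEN iffD2, OF zero_less_one]]
      by eventually_elim (simp add: hD_def)
    then show ?thesis by (rule Lim_transform_eventually[OF tendsto_const])
  qed
  show ?thesis unfolding has_field_derivative_iff using filterlim_at_split r l by blast
qed

lemma hE_deriv: assumes "x \<noteq> 0"
  shows "((\<lambda>y. poly p (1 / y) * exp (- (1 / y))) has_real_derivative
     poly ((p - pderiv p) * [:0,0,1:]) (1 / x) * exp (- (1 / x))) (at x)"
proof -
  have i: "((\<lambda>y. 1 / y) has_real_derivative (- ((1 / x) ^ 2))) (at x)"
    using DERIV_inverse[OF assms] by (simp add: inverse_eq_divide power2_eq_square)
  have a: "((\<lambda>y. poly p (1 / y)) has_real_derivative poly (pderiv p) (1 / x) * (- ((1 / x) ^ 2))) (at x)"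
    by (rule DERIV_chain2[OF poly_DERIV i])
  have b: "((\<lambda>y. exp (- (1 / y))) has_real_derivative exp (- (1 / x)) * (1 / x) ^ 2) (at x)"
    using DERIV_chain2[OF DERIV_exp DERIV_minus[OF i]] by simp
  have "((\<lambda>y. poly p (1 / y) * exp (- (1 / y))) has_real_derivative
      poly (pderiv p) (1 / x) * (- ((1 / x) ^ 2)) * exp (- (1 / x)) + exp (- (1 / x)) * (1 / x) ^ 2 * poly p (1 / x)) (at x)"
    by (rule DERIV_mult[OF a b])
  moreover have "poly (pderiv p) (1 / x) * (- ((1 / x) ^ 2)) * exp (- (1 / x)) + exp (- (1 / x)) * (1 / x) ^ 2 * poly p (1 / x)
     = poly ((p - pderiv p) * [:0,0,1:]) (1 / x) * exp (- (1 / x))"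
    by (simp add: algebra_simps power2_eq_square)
  ultimately show ?thesis by simp
qed

lemma hD_deriv: "(hD k has_real_derivative hD (Suc k) x) (at x)"
proof -
  consider "x < 0" | "x = 0" | "x > 0" by linarith
  then show ?thesis
  proof cases
    case 1
    have "((\<lambda>y. 0) has_real_derivative 0) (at x)" by (rule DERIV_const)
    then have "(hD k has_real_derivative 0) (at x)"
      by (rule has_field_derivative_transform_within_open[of _ _ _ "{..<0}"]) (use 1 in \<open>auto simp: hD_def\<close>)
    then show ?thesis using 1 by (simp add: hD_def)
  next
    case 2 then show ?thesis using hD_deriv0[of k] by (simp add: hD_def)
  next
    case 3
    have e: "((\<lambda>y. poly (hP k) (1 / y) * exp (- (1 / y))) has_real_derivative poly (hP (Suc k)) (1 / x) * exp (- (1 / x))) (at x)"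
      using hE_deriv[of x "hP k"] 3 by simp
    have "(hD k has_real_derivative poly (hP (Suc k)) (1 / x) * exp (- (1 / x))) (at x)"
      by (rule has_field_derivative_transform_within_open[OF e, of "{0<..}"])
         (use 3 in \<open>auto simp: hD_def\<close>)
    then show ?thesis using 3 by (simp add: hD_def)
  qed
qed

lemma smooth_hfun: "smooth hfun"
proof -
  have "hD 0 = hfun" by (auto simp: hD_def hfun_def fun_eq_iff)
  then show ?thesis using family(1)[of hD, OF _ hD_deriv] by simp
qed

lemma hfun_nonneg: "hfun x \<ge> 0" by (simp add: hfun_def)
lemma hfun_pos: "x > 0 \<Longrightarrow> hfun x > 0" by (simp add: hfun_def)
lemma hfun_zero: "x \<le> 0 \<Longrightarrow> hfun x = 0" by (simp add: hfun_def)
lemma hfun_strict: "0 < x \<Longrightarrow> x < y \<Longrightarrow> hfun x < hfun y"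
  by (simp add: hfun_def divide_simps)
lemma hfun_mono: assumes "x \<le> y" shows "hfun x \<le> hfun y"
proof (cases "x \<le> 0")
  case True then show ?thesis by (simp add: hfun_zero hfun_nonneg)
next
  case False
  show ?thesis
  proof (cases "x = y")
    case False
    then have "x < y" using assms by simp
    then show ?thesis using hfun_strict[of x y] \<open>\<not> x \<le> 0\<close> by simp
  qed simp
qed

lemma sden_pos: "hfun x + hfun (1 - x) > 0"
proof (cases "x > 0")
  case True then show ?thesis using hfun_pos[of x] hfun_nonneg[of "1 - x"] by simp
next
  case False then show ?thesis using hfun_pos[of "1 - x"] hfun_nonneg[of x] by simp
qed

lemma smooth_sfun: "smooth sfun"
proof -
  have g: "smooth (\<lambda>x. hfun x + hfun (1 - x))"
  proof -
    have "smooth (\<lambda>x. hfun x + (1 * hfun ((-1) * x + 1) + 0))"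
      by (intro smooth_add(1) smooth_affine(1) smooth_hfun)
    then show ?thesis by simp
  qed
  have "smooth (\<lambda>x. hfun x / (hfun x + hfun (1 - x)))"
    by (rule smooth_div[OF g _ smooth_hfun]) (metis sden_pos less_irrefl)
  then show ?thesis by (simp add: sfun_def[abs_def])
qed

lemma sfun_0: "x \<le> 0 \<Longrightarrow> sfun x = 0" by (simp add: sfun_def hfun_zero)
lemma sfun_1: "x \<ge> 1 \<Longrightarrow> sfun x = 1"
  using sden_pos[of x] by (simp add: sfun_def hfun_zero)
lemma sfun_strict: assumes "u < v" "u < 1" "0 < v" shows "sfun u < sfun v"
proof -
  have p1: "hfun u + hfun (1 - u) > 0" "hfun v + hfun (1 - v) > 0" by (rule sden_pos)+
  have hv: "hfun v > 0" using assms by (intro hfun_pos)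
  have h1u: "hfun (1 - u) > 0" using assms by (intro hfun_pos) simp
  have m1: "hfun (1 - v) \<le> hfun (1 - u)" using assms by (intro hfun_mono) simp
  have key: "hfun u * hfun (1 - v) < hfun v * hfun (1 - u)"
  proof (cases "u > 0")
    case True
    have "hfun u < hfun v" using True assms by (intro hfun_strict)
    have "hfun u * hfun (1 - v) \<le> hfun u * hfun (1 - u)"
      using m1 hfun_nonneg[of u] by (intro mult_left_mono)
    also have "\<dots> < hfun v * hfun (1 - u)" using \<open>hfun u < hfun v\<close> h1u by simp
    finally show ?thesis .
  next
    case False then show ?thesis using hv h1u by (simp add: hfun_zero)
  qed
  have k2: "hfun u * (hfun v + hfun (1 - v)) < hfun v * (hfun u + hfun (1 - u))"
    using key by (simp add: algebra_simps)
  have "hfun u / (hfun u + hfun (1 - u)) = (hfun u * (hfun v + hfun (1 - v))) / ((hfun u + hfun (1 - u)) * (hfun v + hfun (1 - v)))"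
    using p1 by simp
  also have "\<dots> < (hfun v * (hfun u + hfun (1 - u))) / ((hfun u + hfun (1 - u)) * (hfun v + hfun (1 - v)))"
    by (rule divide_strict_right_mono[OF k2]) (use p1 in simp)
  also have "\<dots> = hfun v / (hfun v + hfun (1 - v))" using p1 by simp
  finally show ?thesis unfolding sfun_def .
qed
lemma sfun_mono: assumes "u \<le> v" shows "sfun u \<le> sfun v"
proof -
  consider "u = v" | "u < v" "u < 1" "0 < v" | "u \<ge> 1" | "v \<le> 0" using assms by linarith
  then show ?thesis
  proof cases
    case 2 then show ?thesis using sfun_strict[of u v] by simp
  next
    case 3 then show ?thesis using assms sfun_1[of u] sfun_1[of v] by simp
  next
    case 4 then show ?thesis using assms sfun_0[of u] sfun_0[of v] by simp
  qed simp
qed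
lemma sfun_range: "0 \<le> sfun x" "sfun x \<le> 1"
proof -
  show "0 \<le> sfun x"
    by (cases "x \<le> 0") (simp add: sfun_0, use sfun_mono[of 0 x] in \<open>simp add: sfun_0\<close>)
  show "sfun x \<le> 1"
    by (cases "x \<ge> 1") (simp add: sfun_1, use sfun_mono[of x 1] in \<open>simp add: sfun_1\<close>)
qed

lemma dn_const_region:
  assumes "smooth f" "open U" "\<And>y. y \<in> U \<Longrightarrow> f y = c" "y \<in> U"
  shows "dn f k y = (if k = 0 then c else 0)"
  using assms(4)
proof (induction k arbitrary: y)
  case 0 then show ?case using assms(3) by simp
next
  case (Suc k)
  have "((\<lambda>x. if k = 0 then c else 0) has_real_derivative dn f (Suc k) y) (at y)"
    by (rule has_field_derivative_transform_within_open[OF dn_deriv[OF assms(1)] assms(2) Suc.prems])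
       (use Suc.IH in auto)
  from DERIV_unique[OF this DERIV_const] show ?case by simp
qed

lemma dn_sfun_neg: "y < 0 \<Longrightarrow> dn sfun k y = 0"
  using dn_const_region[OF smooth_sfun, of "{..<0}" 0 y k] by (auto simp: sfun_0)
lemma dn_sfun_big: "y > 1 \<Longrightarrow> dn sfun k y = (if k = 0 then 1 else 0)"
  using dn_const_region[OF smooth_sfun, of "{1<..}" 1 y k] by (auto simp: sfun_1)

lemma dn_sfun_bound: "\<exists>B. \<forall>x. \<bar>dn sfun k x\<bar> \<le> B"
proof -
  have "continuous_on {0..1} (dn sfun k)"
    by (intro continuous_at_imp_continuous_on ballI DERIV_isCont[OF dn_deriv[OF smooth_sfun]])
  then have "compact (dn sfun k ` {0..1})" by (rule compact_continuous_image) simp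
  then have "bounded (dn sfun k ` {0..1})" by (rule compact_imp_bounded)
  from this[unfolded bounded_real] obtain a where a: "\<forall>y\<in>dn sfun k ` {0..1}. \<bar>y\<bar> \<le> a" ..
  have "\<bar>dn sfun k x\<bar> \<le> max a 1" for x
  proof -
    consider "x < 0" | "x \<in> {0..1}" | "x > 1" by force
    then show ?thesis
    proof cases
      case 1 then show ?thesis by (simp add: dn_sfun_neg le_max_iff_disj)
    next
      case 2 then have "\<bar>dn sfun k x\<bar> \<le> a" using a by simp
      then show ?thesis by linarith
    next
      case 3 then show ?thesis by (simp add: dn_sfun_big le_max_iff_disj)
    qed
  qed
  then show ?thesis by blast
qed

lemma series_mono:
  fixes \<phi> :: "nat \<Rightarrow> real \<Rightarrow> real"
  assumes "summable (\<lambda>n. \<phi> n x)" "summable (\<lambda>n. \<phi> n y)" "\<And>n. \<phi> n x \<le> \<phi> n y"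
  shows "(\<Sum>n. \<phi> n x) \<le> (\<Sum>n. \<phi> n y)"
  using assms by (intro suminf_le) auto

lemma series_strict:
  fixes \<phi> :: "nat \<Rightarrow> real \<Rightarrow> real"
  assumes "summable (\<lambda>n. \<phi> n x)" "summable (\<lambda>n. \<phi> n y)" "\<And>n. \<phi> n x \<le> \<phi> n y"
    "\<phi> i x < \<phi> i y"
  shows "(\<Sum>n. \<phi> n x) < (\<Sum>n. \<phi> n y)"
proof -
  have s: "summable (\<lambda>n. \<phi> n y - \<phi> n x)" using assms by (intro summable_diff)
  have "0 < (\<Sum>n. \<phi> n y - \<phi> n x)"
    by (rule suminf_pos2[OF s, of i]) (use assms in auto)
  also have "(\<Sum>n. \<phi> n y - \<phi> n x) = (\<Sum>n. \<phi> n y) - (\<Sum>n. \<phi> n x)"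
    using assms by (intro suminf_diff[symmetric])
  finally show ?thesis by simp
qed

lemma piece_index:
  fixes p :: "nat \<Rightarrow> real"
  assumes "\<And>i. p i < p (Suc i)" "p 0 \<le> x" "x < p N"
  shows "\<exists>i. p i \<le> x \<and> x < p (Suc i)"
  using assms(3)
proof (induction N)
  case 0 then show ?case using assms(2) by simp
next
  case (Suc N)
  show ?case
  proof (cases "x < p N")
    case True then show ?thesis using Suc.IH by blast
  next
    case False then show ?thesis using Suc.prems by (intro exI[of _ N]) simp
  qed
qed

lemma seq_p:
  fixes w :: real
  obtains p where "\<And>i. p i \<in> \<rat>" "\<And>i. w - 2 * (1/4) ^ i < p i" "\<And>i. p i < w - (1/4) ^ i"
proof -
  have "\<forall>i. \<exists>r. r \<in> \<rat> \<and> w - 2 * (1/4) ^ i < r \<and> r < w - (1/4::real) ^ i"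
  proof
    fix i :: nat
    have "w - 2 * (1/4) ^ i < w - (1/4::real) ^ i" by simp
    then show "\<exists>r. r \<in> \<rat> \<and> w - 2 * (1/4) ^ i < r \<and> r < w - (1/4::real) ^ i"
      using Rats_dense_in_real by blast
  qed
  then have "\<exists>p. \<forall>i. p i \<in> \<rat> \<and> w - 2 * (1/4) ^ i < p i \<and> p i < w - (1/4::real) ^ i"
    by (rule choice)
  then obtain p where "\<forall>i. p i \<in> \<rat> \<and> w - 2 * (1/4) ^ i < p i \<and> p i < w - (1/4::real) ^ i" ..
  then show ?thesis using that by blast
qed

definition EE :: "nat \<Rightarrow> real" where "EE i = (1/2) ^ (2*i*i + 2*i + 1)"

lemma seq_q:
  fixes z :: real
  obtains q where "\<And>i. q i \<in> \<rat>" "\<And>i. z - 2 * EE i < q i" "\<And>i. q i < z - EE i"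
proof -
  have "\<forall>i. \<exists>r. r \<in> \<rat> \<and> z - 2 * EE i < r \<and> r < z - EE i"
  proof
    fix i :: nat
    have "z - 2 * EE i < z - EE i" by (simp add: EE_def)
    then show "\<exists>r. r \<in> \<rat> \<and> z - 2 * EE i < r \<and> r < z - EE i"
      using Rats_dense_in_real by blast
  qed
  then have "\<exists>q. \<forall>i. q i \<in> \<rat> \<and> z - 2 * EE i < q i \<and> q i < z - EE i"
    by (rule choice)
  then obtain q where "\<forall>i. q i \<in> \<rat> \<and> z - 2 * EE i < q i \<and> q i < z - EE i" ..
  then show ?thesis using that by blast
qed

lemma EE_pos: "EE i > 0" by (simp add: EE_def)
lemma EE2: "2 * EE i = (1/2) ^ (2*i*i + 2*i)"
proof -
  have "EE i = (1/2) ^ (2*i*i + 2*i) * (1/2)" unfolding EE_def by (simp only: power_add power_one_right)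
  then show ?thesis by simp
qed
lemma EE_step: "2 * EE (Suc i) \<le> EE i"
proof -
  have "(1/2::real) ^ (2*Suc i*Suc i + 2*Suc i) \<le> (1/2) ^ (2*i*i + 2*i + 1)"
    by (rule power_decreasing) auto
  then show ?thesis unfolding EE2 by (simp only: EE_def)
qed
lemma EE_le: "2 * EE i \<le> (1/2) ^ i"
  unfolding EE2 by (rule power_decreasing) auto
lemma EE_split: "2 * EE i = ((1/2) ^ (2*i+1)) ^ i * (1/2) ^ i"
proof -
  have e: "2*i*i + 2*i = (2*i+1)*i + i" by (simp add: algebra_simps)
  show ?thesis unfolding EE2 e by (simp only: power_add power_mult)
qed

lemma nat_piece_pos: assumes "(y::real) > 0" shows "\<exists>m::nat. real m < y \<and> y \<le> real m + 1"
proof -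
  have c: "0 < \<lceil>y\<rceil>" using assms by simp
  have r: "real (nat (\<lceil>y\<rceil> - 1)) = of_int \<lceil>y\<rceil> - 1" using c by simp
  show ?thesis using ceiling_correct[of y] r by (intro exI[of _ "nat (\<lceil>y\<rceil> - 1)"]) simp
qed

lemma nat_piece_nonneg: assumes "(y::real) \<ge> 0" shows "\<exists>m::nat. real m \<le> y \<and> y < real m + 1"
proof -
  have r: "real (nat \<lfloor>y\<rfloor>) = of_int \<lfloor>y\<rfloor>" using assms by simp
  show ?thesis using floor_correct[of y] r by (intro exI[of _ "nat \<lfloor>y\<rfloor>"]) simp
qed

lemma exists_t:
  fixes w z :: real
  shows "\<exists>t. t \<in> T3 \<and> t w = z \<and> (\<forall>x<w. simF x (t x))"
proof -
  obtain p where pQ: "\<And>i. p i \<in> \<rat>" and plo: "\<And>i. w - 2 * (1/4) ^ i < p i"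
      and phi: "\<And>i. p i < w - (1/4) ^ i"
    using seq_p[of w] by blast
  obtain q where qQ: "\<And>i. q i \<in> \<rat>" and qlo: "\<And>i. z - 2 * EE i < q i" and qhi: "\<And>i. q i < z - EE i"
    using seq_q[of z] by blast
  have pinc: "p i < p (Suc i)" for i
  proof -
    have "p i < w - (1/4)^i" by (rule phi)
    also have "\<dots> \<le> w - 2 * (1/4) ^ Suc i" by simp
    also have "\<dots> < p (Suc i)" by (rule plo)
    finally show ?thesis .
  qed
  have pgap: "(1/2) ^ (2*i+1) \<le> p (Suc i) - p i" for i
  proof -
    have e: "(1/2::real) ^ (2*i+1) = (1/2) * (1/4) ^ i"
      by (simp only: power_add power_mult power_one_right) (simp add: power2_eq_square)
    have "(1/2::real) * (1/4) ^ i = (w - 2 * (1/4) ^ Suc i) - (w - (1/4) ^ i)" by simp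
    then show ?thesis using plo[of "Suc i"] phi[of i] e by linarith
  qed
  have pw: "p i < w" for i using phi[of i] by (smt (verit) zero_less_power divide_pos_pos)
  have pmono: "i \<le> j \<Longrightarrow> p i \<le> p j" for i j
    using lift_Suc_mono_le[of p, OF less_imp_le[OF pinc]] by blast
  have pexceed: "\<exists>N. x < p N" if "x < w" for x
  proof -
    have "\<forall>\<^sub>F n in sequentially. \<bar>(1/4::real)^n\<bar> < (w - x) / 2"
      by (rule Archimedean_eventually_pow_inverse) (use that in auto)
    then obtain N where "\<bar>(1/4::real)^N\<bar> < (w - x) / 2"
      unfolding eventually_sequentially by blast
    then have "x < p N" using plo[of N] by simp
    then show ?thesis ..
  qed
  define d where "d = (\<lambda>i. q (Suc i) - q i)"
  define D where "D = (\<lambda>i. p (Suc i) - p i)"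
  have Dpos: "D i > 0" for i using pinc[of i] by (simp add: D_def)
  have qinc: "q i < q (Suc i)" for i
    using qhi[of i] EE_step[of i] qlo[of "Suc i"] by linarith
  have dpos: "d i > 0" for i using qinc[of i] by (simp add: d_def)
  have dbound: "d i < 2 * EE i" for i
    using qhi[of "Suc i"] qlo[of i] EE_pos[of "Suc i"] by (simp add: d_def)
  have qlim: "q \<longlonglongrightarrow> z"
  proof (rule tendsto_sandwich[of "\<lambda>n. z - (1/2)^n" _ _ "\<lambda>n. z"])
    show "\<forall>\<^sub>F n in sequentially. z - (1/2)^n \<le> q n"
      using qlo EE_le by (intro always_eventually allI) (smt (verit))
    show "\<forall>\<^sub>F n in sequentially. q n \<le> z"
      using qhi EE_pos by (intro always_eventually allI) (smt (verit))
    have "(\<lambda>n. z - (1/2::real)^n) \<longlonglongrightarrow> z - 0"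
      by (intro tendsto_diff tendsto_const LIMSEQ_power_zero) simp
    then show "(\<lambda>n. z - (1/2::real)^n) \<longlonglongrightarrow> z" by simp
  qed simp
  have dsums: "d sums (z - q 0)" unfolding d_def by (rule telescope_sums[OF qlim])
  have key: "d i / D i ^ k \<le> (1/2) ^ i" if "k \<le> i" for i k
  proof -
    define l where "l = (1/2::real) ^ (2*i+1)"
    have l0: "0 < l" by (simp add: l_def)
    have l1: "l \<le> 1" unfolding l_def by (rule power_le_one) auto
    have lD: "l \<le> D i" using pgap[of i] by (simp add: l_def D_def)
    have "d i / D i ^ k \<le> (2 * EE i) / l ^ k"
      by (rule frac_le) (use dpos[of i] dbound[of i] l0 lD in \<open>auto intro: power_mono less_imp_le\<close>)
    also have "2 * EE i = l ^ (i - k) * l ^ k * (1/2) ^ i"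
      using that by (simp add: EE_split l_def power_add[symmetric])
    also have "l ^ (i - k) * l ^ k * (1/2) ^ i / l ^ k = l ^ (i - k) * (1/2) ^ i"
      using l0 by simp
    also have "\<dots> \<le> (1/2) ^ i"
      by (rule mult_left_le_one_le) (use l0 l1 in \<open>auto intro: power_le_one\<close>)
    finally show ?thesis .
  qed
  define A where "A = (\<lambda>i x. d i * sfun ((x - p i) / D i))"
  define L where "L = (\<lambda>(n::nat) x. sfun (x - (p 0 - real n - 1)) - 1)"
  define R where "R = (\<lambda>(n::nat) x. sfun (x - w - real n))"
  have A_aff: "A i = (\<lambda>x. d i * sfun ((1 / D i) * x + (- p i / D i)) + 0)" for i
    using Dpos[of i] by (simp add: A_def fun_eq_iff diff_divide_distrib)
  have L_aff: "L n = (\<lambda>x. 1 * sfun (1 * x + (- (p 0 - real n - 1))) + (-1))" for n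
    unfolding L_def by (simp add: fun_eq_iff algebra_simps)
  have R_aff: "R n = (\<lambda>x. 1 * sfun (1 * x + (- w - real n)) + 0)" for n
    unfolding R_def by (simp add: fun_eq_iff algebra_simps)
  have smA: "smooth (A i)" for i unfolding A_aff by (rule smooth_affine(1)[OF smooth_sfun])
  have smL: "smooth (L n)" for n unfolding L_aff by (rule smooth_affine(1)[OF smooth_sfun])
  have smR: "smooth (R n)" for n unfolding R_aff by (rule smooth_affine(1)[OF smooth_sfun])
  have dnA: "dn (A i) k x = d i * (1 / D i) ^ k * dn sfun k ((1 / D i) * x + (- p i / D i))" for i k x
    unfolding A_aff smooth_affine(2)[OF smooth_sfun] by simp
  have dnL: "dn (L n) k x = dn sfun k (x - (p 0 - real n - 1)) + (if k = 0 then -1 else 0)" for n k x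
    unfolding L_aff smooth_affine(2)[OF smooth_sfun] by (simp add: algebra_simps)
  have dnR: "dn (R n) k x = dn sfun k (x - w - real n)" for n k x
    unfolding R_aff smooth_affine(2)[OF smooth_sfun] by (simp add: algebra_simps)
  have bA: "\<exists>\<epsilon>>0. \<exists>M. summable M \<and> (\<forall>\<^sub>F n in sequentially. \<forall>x\<in>ball c \<epsilon>. \<bar>dn (A n) k x\<bar> \<le> M n)" for k c
  proof -
    obtain B where B: "\<And>x. \<bar>dn sfun k x\<bar> \<le> B" using dn_sfun_bound[of k] by blast
    have B0: "0 \<le> B" using B[of 0] by simp
    define M where "M = (\<lambda>i. B * (d i / D i ^ k))"
    have bd: "\<bar>dn (A i) k x\<bar> \<le> M i" for i x
    proof -
      have "\<bar>dn (A i) k x\<bar> = d i * (1 / D i) ^ k * \<bar>dn sfun k ((1 / D i) * x + (- p i / D i))\<bar>"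
        unfolding dnA using dpos[of i] Dpos[of i] by (simp add: abs_mult)
      also have "\<dots> \<le> d i * (1 / D i) ^ k * B"
        by (rule mult_left_mono[OF B]) (use dpos[of i] Dpos[of i] in simp)
      also have "\<dots> = M i" by (simp add: M_def power_one_over)
      finally show ?thesis .
    qed
    have sM: "summable M"
    proof (rule summable_comparison_test'[of "\<lambda>i. B * (1/2)^i" k])
      show "summable (\<lambda>i. B * (1/2::real)^i)" by (intro summable_mult summable_geometric) simp
      fix n assume "k \<le> n"
      have "0 \<le> M n" using B0 dpos[of n] Dpos[of n] by (simp add: M_def)
      moreover have "M n \<le> B * (1/2)^n"
        unfolding M_def by (rule mult_left_mono[OF key[OF \<open>k \<le> n\<close>] B0])
      ultimately show "norm (M n) \<le> B * (1/2)^n" by simp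
    qed
    show ?thesis using bd sM by (intro exI[of _ 1] conjI exI[of _ M] always_eventually) auto
  qed
  have bL: "\<exists>\<epsilon>>0. \<exists>M. summable M \<and> (\<forall>\<^sub>F n in sequentially. \<forall>x\<in>ball c \<epsilon>. \<bar>dn (L n) k x\<bar> \<le> M n)" for k c
  proof -
    have "\<forall>\<^sub>F n in sequentially. \<forall>x\<in>ball c 1. \<bar>dn (L n) k x\<bar> \<le> 0"
      unfolding eventually_sequentially
    proof (intro exI[of _ "nat \<lceil>p 0 - c + 1\<rceil>"] allI impI ballI)
      fix n x assume n: "nat \<lceil>p 0 - c + 1\<rceil> \<le> n" and x: "x \<in> ball c 1"
      have "p 0 - c + 1 \<le> real n" using n by linarith
      moreover have "c - 1 < x" using x by (simp add: dist_real_def)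
      ultimately have "1 < x - (p 0 - real n - 1)" by linarith
      then show "\<bar>dn (L n) k x\<bar> \<le> 0" unfolding dnL by (simp add: dn_sfun_big)
    qed
    then show ?thesis by (intro exI[of _ 1] conjI exI[of _ "\<lambda>_. 0"]) auto
  qed
  have bR: "\<exists>\<epsilon>>0. \<exists>M. summable M \<and> (\<forall>\<^sub>F n in sequentially. \<forall>x\<in>ball c \<epsilon>. \<bar>dn (R n) k x\<bar> \<le> M n)" for k c
  proof -
    have "\<forall>\<^sub>F n in sequentially. \<forall>x\<in>ball c 1. \<bar>dn (R n) k x\<bar> \<le> 0"
      unfolding eventually_sequentially
    proof (intro exI[of _ "nat \<lceil>c + 1 - w\<rceil>"] allI impI ballI)
      fix n x assume n: "nat \<lceil>c + 1 - w\<rceil> \<le> n" and x: "x \<in> ball c 1"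
      have "c + 1 - w \<le> real n" using n by linarith
      moreover have "x < c + 1" using x by (simp add: dist_real_def)
      ultimately have "x - w - real n < 0" by linarith
      then show "\<bar>dn (R n) k x\<bar> \<le> 0" unfolding dnR by (simp add: dn_sfun_neg)
    qed
    then show ?thesis by (intro exI[of _ 1] conjI exI[of _ "\<lambda>_. 0"]) auto
  qed
  have sA: "smooth (\<lambda>x. \<Sum>n. A n x)" and suA: "\<And>x. summable (\<lambda>n. A n x)"
    using smooth_series[of A, OF smA bA] by auto
  have sL: "smooth (\<lambda>x. \<Sum>n. L n x)" and suL: "\<And>x. summable (\<lambda>n. L n x)"
    using smooth_series[of L, OF smL bL] by auto
  have sR: "smooth (\<lambda>x. \<Sum>n. R n x)" and suR: "\<And>x. summable (\<lambda>n. R n x)"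
    using smooth_series[of R, OF smR bR] by auto
  define t where "t = (\<lambda>x. q 0 + ((\<Sum>n. L n x) + ((\<Sum>n. A n x) + (\<Sum>n. R n x))))"
  have st: "smooth t" unfolding t_def
    by (rule smooth_add(1)[OF smooth_const(1) smooth_add(1)[OF sL smooth_add(1)[OF sA sR]]])
  have L_zero: "L n x = 0" if "p 0 - real n \<le> x" for n x
    using that by (simp add: L_def sfun_1)
  have L_m1: "L n x = -1" if "x \<le> p 0 - real n - 1" for n x
    using that by (simp add: L_def sfun_0)
  have A_full: "A j x = d j" if "p (Suc j) \<le> x" for j x
  proof -
    have "1 \<le> (x - p j) / D j" using that Dpos[of j] by (simp add: D_def le_divide_eq)
    then show ?thesis by (simp add: A_def sfun_1)
  qed
  have A_zero: "A j x = 0" if "x \<le> p j" for j x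
  proof -
    have "(x - p j) / D j \<le> 0" using that Dpos[of j] by (simp add: divide_le_0_iff)
    then show ?thesis by (simp add: A_def sfun_0)
  qed
  have R_zero: "R n x = 0" if "x \<le> w + real n" for n x
    using that by (simp add: R_def sfun_0)
  have R_one: "R n x = 1" if "w + real n + 1 \<le> x" for n x
    using that by (simp add: R_def sfun_1)
  have SL0: "(\<Sum>n. L n x) = 0" if "p 0 \<le> x" for x
  proof -
    have "(\<lambda>n. L n x) = (\<lambda>n. 0)" using that by (intro ext L_zero) simp
    then show ?thesis by simp
  qed
  have SLm: "(\<Sum>n. L n x) = - real m + L m x" if "p 0 - real m - 1 \<le> x" "x \<le> p 0 - real m" for m x
  proof -
    have "(\<Sum>n. L n x) = (\<Sum>n\<in>{..<Suc m}. L n x)"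
    proof (rule suminf_finite)
      fix n assume "n \<notin> {..<Suc m}"
      then have "real m + 1 \<le> real n" by simp
      then show "L n x = 0" using that by (intro L_zero) linarith
    qed simp
    also have "\<dots> = (\<Sum>n<m. L n x) + L m x" by simp
    also have "(\<Sum>n<m. L n x) = (\<Sum>n<m. -1)"
    proof (rule sum.cong)
      fix n assume "n \<in> {..<m}"
      then have "real n + 1 \<le> real m" by simp
      then show "L n x = -1" using that by (intro L_m1) linarith
    qed simp
    finally show ?thesis by simp
  qed
  have SA0: "(\<Sum>n. A n x) = 0" if "x \<le> p 0" for x
  proof -
    have "(\<lambda>n. A n x) = (\<lambda>n. 0)" using that pmono by (intro ext A_zero) (meson le0 order_trans)
    then show ?thesis by simp
  qed
  have SAi: "(\<Sum>n. A n x) = (q i - q 0) + A i x" if "p i \<le> x" "x \<le> p (Suc i)" for i x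
  proof -
    have "(\<Sum>n. A n x) = (\<Sum>n\<in>{..<Suc i}. A n x)"
    proof (rule suminf_finite)
      fix n assume "n \<notin> {..<Suc i}"
      then have "Suc i \<le> n" by simp
      then show "A n x = 0" using that pmono by (intro A_zero) (meson order_trans)
    qed simp
    also have "\<dots> = (\<Sum>n<i. A n x) + A i x" by simp
    also have "(\<Sum>n<i. A n x) = (\<Sum>n<i. q (Suc n) - q n)"
    proof (rule sum.cong)
      fix n assume "n \<in> {..<i}"
      then have "Suc n \<le> i" by simp
      then have "A n x = d n" using that pmono by (intro A_full) (meson order_trans)
      then show "A n x = q (Suc n) - q n" by (simp add: d_def)
    qed simp
    also have "(\<Sum>n<i. q (Suc n) - q n) = q i - q 0" by (rule sum_lessThan_telescope)
    finally show ?thesis .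
  qed
  have SAtop: "(\<Sum>n. A n x) = z - q 0" if "w \<le> x" for x
  proof -
    have "(\<lambda>n. A n x) = d" using that pw by (intro ext A_full) (meson less_imp_le order_trans)
    then show ?thesis using sums_unique[OF dsums] by simp
  qed
  have SR0: "(\<Sum>n. R n x) = 0" if "x \<le> w" for x
  proof -
    have "(\<lambda>n. R n x) = (\<lambda>n. 0)" using that by (intro ext R_zero) simp
    then show ?thesis by simp
  qed
  have SRm: "(\<Sum>n. R n (w + real m)) = real m" for m
  proof -
    have "(\<Sum>n. R n (w + real m)) = (\<Sum>n\<in>{..<m}. R n (w + real m))"
    proof (rule suminf_finite)
      fix n assume "n \<notin> {..<m}"
      then show "R n (w + real m) = 0" by (intro R_zero) simp
    qed simp
    also have "\<dots> = (\<Sum>n\<in>{..<m}. 1)"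
    proof (rule sum.cong)
      fix n assume "n \<in> {..<m}"
      then show "R n (w + real m) = 1" by (intro R_one) simp
    qed simp
    finally show ?thesis by simp
  qed
  have p0w: "p 0 < w" by (rule pw)
  have tw: "t w = z" unfolding t_def using SL0[of w] SAtop[of w] SR0[of w] p0w by simp
  have tL: "t x = q 0 - real m + L m x" if "p 0 - real m - 1 \<le> x" "x \<le> p 0 - real m" for m x
    unfolding t_def using SLm[OF that] SA0[of x] SR0[of x] that p0w by simp
  have tA: "t x = q i + A i x" if "p i \<le> x" "x \<le> p (Suc i)" for i x
  proof -
    have "p 0 \<le> x" using that pmono[of 0 i] by simp
    moreover have "x \<le> w" using that pw[of "Suc i"] by simp
    ultimately show ?thesis unfolding t_def using SL0[of x] SAi[OF that] SR0[of x] by simp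
  qed
  have tR: "t (w + real m) = z + real m" for m
  proof -
    have "p 0 \<le> w + real m" using p0w by simp
    then show ?thesis unfolding t_def using SL0 SAtop[of "w + real m"] SRm[of m] by simp
  qed
  have pos_piece: "\<exists>m::nat. p 0 - real m - 1 \<le> x \<and> x < p 0 - real m" if hx: "x < p 0" for x
  proof -
    obtain m :: nat where "real m < p 0 - x" "p 0 - x \<le> real m + 1"
      using nat_piece_pos[of "p 0 - x"] hx by auto
    then show ?thesis by (intro exI[of _ m]) linarith
  qed
  have mid_piece: "\<exists>i. p i \<le> x \<and> x < p (Suc i)" if hx: "p 0 \<le> x" "x < w" for x
  proof -
    obtain N where "x < p N" using pexceed[OF hx(2)] by blast
    then show ?thesis using piece_index[of p x N] pinc hx(1) by blast
  qed
  have simF_t: "simF x (t x)" if xw: "x < w" for x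
  proof (cases "x < p 0")
    case True
    then obtain m :: nat where m: "p 0 - real m - 1 \<le> x" "x < p 0 - real m" using pos_piece by blast
    have "sAB (p 0 - real m - 1) (q 0 - real m - 1) (p 0 - real m) (q 0 - real m) x = t x"
      using tL[of m x] m by (simp add: sAB_def L_def)
    moreover have "p 0 - real m - 1 \<in> \<rat>" "q 0 - real m - 1 \<in> \<rat>" "p 0 - real m \<in> \<rat>" "q 0 - real m \<in> \<rat>"
      using pQ[of 0] qQ[of 0] by (auto intro!: Rats_diff)
    ultimately show ?thesis unfolding simF_def using m
      by (intro exI[of _ "p 0 - real m - 1"] exI[of _ "q 0 - real m - 1"] exI[of _ "p 0 - real m"] exI[of _ "q 0 - real m"]) auto
  next
    case False
    then obtain i where i: "p i \<le> x" "x < p (Suc i)" using mid_piece[of x] xw by force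
    have "sAB (p i) (q i) (p (Suc i)) (q (Suc i)) x = t x"
      using tA[of i x] i by (simp add: sAB_def A_def d_def D_def)
    then show ?thesis unfolding simF_def using i pQ qQ pinc[of i] qinc[of i]
      by (intro exI[of _ "p i"] exI[of _ "q i"] exI[of _ "p (Suc i)"] exI[of _ "q (Suc i)"]) auto
  qed
  have monoL: "L n x \<le> L n y" if "x \<le> y" for n x y
    using sfun_mono[of "x - (p 0 - real n - 1)" "y - (p 0 - real n - 1)"] that by (simp add: L_def)
  have monoA: "A n x \<le> A n y" if "x \<le> y" for n x y
  proof -
    have "(x - p n) / D n \<le> (y - p n) / D n" using that Dpos[of n] by (simp add: divide_right_mono)
    then show ?thesis unfolding A_def using dpos[of n] by (intro mult_left_mono sfun_mono) auto
  qed
  have monoR: "R n x \<le> R n y" if "x \<le> y" for n x y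
    using sfun_mono[of "x - w - real n" "y - w - real n"] that by (simp add: R_def)
  have tmono: "t x < t y" if xy: "x < y" for x y
  proof -
    have l: "(\<Sum>n. L n x) \<le> (\<Sum>n. L n y)" by (rule series_mono[OF suL suL monoL]) (use xy in simp)
    have a: "(\<Sum>n. A n x) \<le> (\<Sum>n. A n y)" by (rule series_mono[OF suA suA monoA]) (use xy in simp)
    have r: "(\<Sum>n. R n x) \<le> (\<Sum>n. R n y)" by (rule series_mono[OF suR suR monoR]) (use xy in simp)
    have "(\<Sum>n. L n x) < (\<Sum>n. L n y) \<or> (\<Sum>n. A n x) < (\<Sum>n. A n y) \<or> (\<Sum>n. R n x) < (\<Sum>n. R n y)"
    proof -
      consider "x < p 0" | "p 0 \<le> x" "x < w" | "w \<le> x" by linarith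
      then show ?thesis
      proof cases
        case 1
        then obtain m :: nat where m: "p 0 - real m - 1 \<le> x" "x < p 0 - real m" using pos_piece by blast
        have "sfun (x - (p 0 - real m - 1)) < sfun (y - (p 0 - real m - 1))"
          by (rule sfun_strict) (use m xy in auto)
        then have "L m x < L m y" by (simp add: L_def)
        then have "(\<Sum>n. L n x) < (\<Sum>n. L n y)"
          by (rule series_strict[OF suL suL monoL, rotated]) (use xy in simp)
        then show ?thesis by blast
      next
        case 2
        then obtain i where i: "p i \<le> x" "x < p (Suc i)" using mid_piece by blast
        have u0: "0 \<le> (x - p i) / D i" using i Dpos[of i] by simp
        have u1: "(x - p i) / D i < 1" using i Dpos[of i] by (simp add: D_def divide_less_eq)
        have uv: "(x - p i) / D i < (y - p i) / D i" using xy Dpos[of i] by (simp add: divide_strict_right_mono)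
        have "sfun ((x - p i) / D i) < sfun ((y - p i) / D i)"
          by (rule sfun_strict) (use u0 u1 uv in auto)
        then have "A i x < A i y" unfolding A_def using dpos[of i] by simp
        then have "(\<Sum>n. A n x) < (\<Sum>n. A n y)"
          by (rule series_strict[OF suA suA monoA, rotated]) (use xy in simp)
        then show ?thesis by blast
      next
        case 3
        then obtain m :: nat where m: "real m \<le> x - w" "x - w < real m + 1"
          using nat_piece_nonneg[of "x - w"] by auto
        have "sfun (x - w - real m) < sfun (y - w - real m)"
          by (rule sfun_strict) (use m xy in auto)
        then have "R m x < R m y" by (simp add: R_def)
        then have "(\<Sum>n. R n x) < (\<Sum>n. R n y)"
          by (rule series_strict[OF suR suR monoR, rotated]) (use xy in simp)
        then show ?thesis by blast
      qed
    qed
    then show ?thesis unfolding t_def using l a r by linarith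
  qed
  have smt: "strict_mono t" by (rule strict_monoI) (rule tmono)
  have cont: "isCont t x" for x by (rule DERIV_isCont[OF sd(1)[OF st]])
  have surj: "surj t"
  proof -
    have "\<exists>x. c = t x" for c
    proof -
      obtain m :: nat where m: "\<bar>c\<bar> + \<bar>q 0\<bar> + \<bar>z\<bar> \<le> real m" using real_arch_simple by blast
      have t1: "t (p 0 - real m) = q 0 - real m"
        using tL[of m "p 0 - real m"] by (simp add: L_def sfun_1)
      have t2: "t (w + real m) = z + real m" by (rule tR)
      have "\<exists>x\<ge>p 0 - real m. x \<le> w + real m \<and> t x = c"
        by (rule IVT) (use t1 t2 m p0w cont in auto)
      then show ?thesis by (metis)
    qed
    then show ?thesis unfolding surj_def by blast
  qed
  have bij: "bij t" unfolding bij_def using strict_mono_imp_inj_on[OF smt] surj by blast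
  have "t \<in> T3" unfolding T3_def using smooth_imp_T3diff[OF st] smt bij by blast
  then show ?thesis using tw simF_t by blast
qed

theorem mainTheorem9:
  fixes P :: "(real \<Rightarrow> S) \<Rightarrow> (real \<Rightarrow> S)"
  assumes "is_predictor P" and "T3_anonymous P"
  shows "\<forall>w z. P abs_S w = P abs_S z"
proof (intro allI)
  fix w z :: real
  obtain t where t: "t \<in> T3" "t w = z" "\<And>x. x < w \<Longrightarrow> simF x (t x)"
    using exists_t[of w z] by blast
  have an: "P (abs_S \<circ> t) = P abs_S \<circ> t" using assms(2) t(1) unfolding T3_anonymous_def by blast
  have agree: "\<forall>y<w. (abs_S \<circ> t) y = abs_S y"
  proof (intro allI impI)
    fix y assume "y < w"
    then have "simF (t y) y" using t(3) simF_sym by blast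
    then have "simF_star (t y) y" unfolding simF_star_def by (simp add: r_into_rtrancl)
    then show "(abs_S \<circ> t) y = abs_S y" by (simp add: S.abs_eq_iff)
  qed
  have "P (abs_S \<circ> t) w = P abs_S w"
    using assms(1) agree unfolding is_predictor_def by blast
  then show "P abs_S w = P abs_S z" using an t(2) by (metis comp_apply)
qed

end
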